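(* Consider the randomized instance described in the context. For any $\delta\in(0,1)$, $\Delta\in(0,m)$ and $\gamma\in(0,0.5]$ satisfying $2\sqrt{\log(2/\delta)\cdot m}\le\frac m2$ and $\frac{4(\Delta+1)}{m}\le\frac12$, under the choice $\epsilon=\frac{2(\Delta+1)}{m-2\sqrt{\log(2/\delta)\cdot m}}$, it holds with probability at least $1-\delta$ (over $X_1,\dots,X_m$) that $\mathrm{OptEnvy}\le-\Delta$.
   Context: Two agents $a,b$, $m$ items ($m$ a multiple of 4), additive utilities. An allocation is a partition $(\mathcal{A}_a,\mathcal{A}_b)$ of $[m]$; $\mathrm{Envy}_{a\to b}=\sum_{i\in\mathcal{A}_b}\mu^a_i-\sum_{i\in\mathcal{A}_a}\mu^a_i$, $\mathrm{Envy}_{b\to a}=\sum_{i\in\mathcal{A}_a}\mu^b_i-\sum_{i\in\mathcal{A}_b}\mu^b_i$, $\mathrm{Envy}=\max$ of the two, $\mathrm{OptEnvy}=\min$ of $\mathrm{Envy}$ over all allocations. Randomized instance: $X_1,\dots,X_m$ i.i.d. $\mathrm{Bernoulli}(1/2)$; for $i\le m/2$: if $X_i=1$ then $\mu^a_i=\frac12+\epsilon,\mu^b_i=\frac12-\epsilon$, if $X_i=0$ then $\mu^a_i=\frac12-\epsilon,\mu^b_i=\frac12+\epsilon$; for $i>m/2$: if $X_i=1$ then $\mu^a_i=\mu^b_i=\frac12+\gamma$, if $X_i=0$ then $\mu^a_i=\mu^b_i=\frac12-\gamma$. $\log$ is natural. *)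

theory Defs
  imports "HOL-Probability.Probability"
begin

text \<open>Items are 1..m. An outcome is X :: nat \<Rightarrow> bool restricted to {1..m}
 (X i = True means X_i = 1). Utilities of the randomized instance:\<close>

definition mu_a :: "nat \<Rightarrow> real \<Rightarrow> real \<Rightarrow> (nat \<Rightarrow> bool) \<Rightarrow> nat \<Rightarrow> real" where
  "mu_a m eps gam X i =
     (if 2 * i \<le> m then (if X i then 1/2 + eps else 1/2 - eps)
      else (if X i then 1/2 + gam else 1/2 - gam))"

definition mu_b :: "nat \<Rightarrow> real \<Rightarrow> real \<Rightarrow> (nat \<Rightarrow> bool) \<Rightarrow> nat \<Rightarrow> real" where
  "mu_b m eps gam X i =
     (if 2 * i \<le> m then (if X i then 1/2 - eps else 1/2 + eps)
      else (if X i then 1/2 + gam else 1/2 - gam))"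

definition envy_ab :: "nat \<Rightarrow> (nat \<Rightarrow> real) \<Rightarrow> nat set \<Rightarrow> real" where
  "envy_ab m ua A = (\<Sum>i\<in>{1..m} - A. ua i) - (\<Sum>i\<in>A. ua i)"

definition envy_ba :: "nat \<Rightarrow> (nat \<Rightarrow> real) \<Rightarrow> nat set \<Rightarrow> real" where
  "envy_ba m ub A = (\<Sum>i\<in>A. ub i) - (\<Sum>i\<in>{1..m} - A. ub i)"

definition envy :: "nat \<Rightarrow> (nat \<Rightarrow> real) \<Rightarrow> (nat \<Rightarrow> real) \<Rightarrow> nat set \<Rightarrow> real" where
  "envy m ua ub A = max (envy_ab m ua A) (envy_ba m ub A)"

definition opt_envy :: "nat \<Rightarrow> (nat \<Rightarrow> real) \<Rightarrow> (nat \<Rightarrow> real) \<Rightarrow> real" where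
  "opt_envy m ua ub = Min ((\<lambda>A. envy m ua ub A) ` Pow {1..m})"

text \<open>Distribution of (X_1,...,X_m): i.i.d. Bernoulli(1/2), i.e. uniform on {1..m} \<rightarrow> bool
 (extensional outside {1..m}).\<close>

definition X_dist :: "nat \<Rightarrow> (nat \<Rightarrow> bool) pmf" where
  "X_dist m = pmf_of_set (PiE {1..m} (\<lambda>_. UNIV))"

end

theory Submission
  imports Defs
begin


lemma X_dist_Pi: "X_dist m = Pi_pmf {1..m} undefined (\<lambda>_. bernoulli_pmf (1/2))"
proof -
  have "PiE_dflt {1..m} undefined (\<lambda>_. UNIV) = PiE {1..m} (\<lambda>_. (UNIV::bool set))"
    by (auto simp: PiE_dflt_def PiE_def extensional_def)
  then show ?thesis unfolding X_dist_def
    by (simp add: bernoulli_pmf_half_conv_pmf_of_set Pi_pmf_of_set)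
qed

lemma tail:
  assumes "m > 0"
  shows "measure_pmf.prob (X_dist m) {X. real m / 4 \<le> \<bar>real (card {i\<in>{1..m}. X i}) - real m / 2\<bar>}
     \<le> 2 * exp (- real m / 8)"
proof -
  interpret binomial_distribution m "1/2" by unfold_locales auto
  have b: "binomial_pmf m (1/2) = map_pmf (\<lambda>f. card {x\<in>{1..m}. f x}) (X_dist m)"
    unfolding X_dist_Pi by (rule binomial_pmf_altdef') auto
  have "measure_pmf.prob (binomial_pmf m (1/2)) {x. \<bar>real x - real m * (1/2)\<bar> \<ge> real m / 4}
     \<le> 2 * exp (-2 * (real m / 4)\<^sup>2 / real m)"
    by (rule prob_abs_ge) (use assms in auto)
  also have "-2 * (real m / 4)\<^sup>2 / real m = - real m / 8"
    using assms by (simp add: power2_eq_square field_simps)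
  finally show ?thesis unfolding b by (simp add: vimage_def)
qed

definition flip :: "nat \<Rightarrow> (nat \<Rightarrow> bool) \<Rightarrow> (nat \<Rightarrow> bool)" where
  "flip m X = (\<lambda>i. if i \<in> {1..m} \<and> m < 2 * i then \<not> X i else X i)"

lemma flip_inv: "flip m (flip m X) = X"
  by (auto simp: flip_def)

lemma map_flip: "map_pmf (flip m) (X_dist m) = X_dist m"
proof -
  have "bij_betw (flip m) (PiE {1..m} (\<lambda>_. (UNIV::bool set))) (PiE {1..m} (\<lambda>_. UNIV))"
    by (rule bij_betwI[of _ _ _ "flip m"]) (auto simp: flip_inv PiE_def extensional_def flip_def)
  then show ?thesis unfolding X_dist_def
    by (subst map_pmf_of_set_bij_betw) (auto simp: PiE_eq_empty_iff finite_PiE)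
qed

lemma tail_flip:
  assumes "m > 0"
  shows "measure_pmf.prob (X_dist m) {X. real m / 4 \<le> \<bar>real (card {i\<in>{1..m}. flip m X i}) - real m / 2\<bar>}
     \<le> 2 * exp (- real m / 8)"
proof -
  have "measure_pmf.prob (X_dist m) {X. real m / 4 \<le> \<bar>real (card {i\<in>{1..m}. flip m X i}) - real m / 2\<bar>}
     = measure_pmf.prob (map_pmf (flip m) (X_dist m)) {X. real m / 4 \<le> \<bar>real (card {i\<in>{1..m}. X i}) - real m / 2\<bar>}"
    by (simp add: vimage_def)
  then show ?thesis using tail[OF assms] by (simp add: map_flip)
qed



lemma net:
  fixes S :: "nat \<Rightarrow> real"
  assumes "S 0 = 0" "\<And>r. r < N \<Longrightarrow> S r \<le> S (Suc r) \<and> S (Suc r) \<le> S r + 1"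
    "0 \<le> t" "t \<le> S N"
  shows "\<exists>r\<le>N. \<bar>S r - t\<bar> \<le> 1/2"
  using assms(2,4)
proof (induction N)
  case 0
  then show ?case using assms(1,3) by auto
next
  case (Suc N)
  show ?case
  proof (cases "t \<le> S N")
    case True
    then show ?thesis using Suc by (metis le_SucI less_SucI)
  next
    case False
    have "S N \<le> S (Suc N) \<and> S (Suc N) \<le> S N + 1" using Suc by auto
    show ?thesis
    proof (cases "t - S N \<le> 1/2")
      case True
      then show ?thesis using False by (intro exI[of _ N]) auto
    next
      case f2: False
      then show ?thesis using False Suc(3) \<open>S N \<le> S (Suc N) \<and> S (Suc N) \<le> S N + 1\<close>
        by (intro exI[of _ "Suc N"]) auto
    qed
  qed
qed

lemma sum_if_card:
  assumes "finite S"
  shows "(\<Sum>i\<in>S. if P i then a else b) = real (card {i\<in>S. P i}) * a + (real (card S) - real (card {i\<in>S. P i})) * (b::real)"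
proof -
  have "(\<Sum>i\<in>S. if P i then a else b) = (\<Sum>i\<in>{i\<in>S. P i}. a) + (\<Sum>i\<in>S - {i\<in>S. P i}. b)"
    using assms by (subst sum.If_cases) (simp_all add: Int_def Diff_eq conj_commute cong: conj_cong)
  also have "card (S - {i\<in>S. P i}) = card S - card {i\<in>S. P i}"
    using assms by (subst card_Diff_subset) auto
  moreover have "card {i\<in>S. P i} \<le> card S" using assms by (intro card_mono) auto
  ultimately show ?thesis by (simp add: of_nat_diff)
qed



lemma det:
  fixes m n :: nat and \<epsilon> \<gamma> \<Delta> :: real and X :: "nat \<Rightarrow> bool"
  assumes mn: "m = 2 * n" and g: "0 < \<gamma>" "\<gamma> \<le> 1/2" and eps: "real n * \<epsilon> \<ge> \<Delta> + 1"
    and good: "\<bar>real (card {i\<in>{1..n}. X i}) - real n / 2\<bar> + \<bar>real (card {i\<in>{n+1..m}. X i}) - real n / 2\<bar> \<le> real n / 2"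
  shows "opt_envy m (mu_a m \<epsilon> \<gamma> X) (mu_b m \<epsilon> \<gamma> X) \<le> - \<Delta>"
proof -
  define ua where "ua = mu_a m \<epsilon> \<gamma> X"
  define ub where "ub = mu_b m \<epsilon> \<gamma> X"
  define F where "F = {i\<in>{1..n}. X i}"
  define k where "k = card F"
  define j where "j = card {i\<in>{n+1..m}. X i}"
  define v where "v = (\<lambda>i. if X i then 1/2 + \<gamma> else 1/2 - \<gamma>)"
  define S where "S = (\<lambda>r. \<Sum>i\<in>{n+1..n+r}. v i)"
  define W where "W = S n"
  have ua1: "ua i = (if X i then 1/2 + \<epsilon> else 1/2 - \<epsilon>)" if "i \<in> {1..n}" for i
    using that mn by (auto simp: ua_def mu_a_def)
  have ub1: "ub i = (if X i then 1/2 - \<epsilon> else 1/2 + \<epsilon>)" if "i \<in> {1..n}" for i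
    using that mn by (auto simp: ub_def mu_b_def)
  have ua2: "ua i = v i" if "i \<in> {n+1..m}" for i
    using that mn by (auto simp: ua_def mu_a_def v_def)
  have ub2: "ub i = v i" if "i \<in> {n+1..m}" for i
    using that mn by (auto simp: ub_def mu_b_def v_def)
  have "W = (\<Sum>i\<in>{n+1..m}. v i)" unfolding W_def S_def using mn by (simp add: mult_2)
  also have "\<dots> = real j * (1/2 + \<gamma>) + (real n - real j) * (1/2 - \<gamma>)"
    unfolding v_def j_def using mn by (subst sum_if_card) auto
  finally have W: "W = real j * (1/2 + \<gamma>) + (real n - real j) * (1/2 - \<gamma>)" .
  have "\<bar>\<gamma> * (2 * real j - real n)\<bar> \<le> \<bar>real j - real n / 2\<bar>"
  proof -
    have "\<bar>\<gamma> * (2 * real j - real n)\<bar> = \<gamma> * (2 * \<bar>real j - real n / 2\<bar>)"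
    proof -
      have "\<bar>2 * real j - real n\<bar> = 2 * \<bar>real j - real n / 2\<bar>" by (simp add: abs_if)
      then show ?thesis using g by (simp add: abs_mult)
    qed
    also have "\<dots> \<le> (1/2) * (2 * \<bar>real j - real n / 2\<bar>)"
      using g by (intro mult_right_mono) auto
    finally show ?thesis by simp
  qed
  moreover have "W = real n / 2 + \<gamma> * (2 * real j - real n)" unfolding W by (simp add: algebra_simps add_divide_distrib diff_divide_distrib)
  moreover have "- \<bar>\<gamma> * (2 * real j - real n)\<bar> \<le> \<gamma> * (2 * real j - real n)" by simp
  ultimately have Wge: "W \<ge> real n / 2 - \<bar>real j - real n / 2\<bar>" by linarith
  define t where "t = (real n / 2 - real k + W) / 2"
  have good': "\<bar>real k - real n / 2\<bar> + \<bar>real j - real n / 2\<bar> \<le> real n / 2"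
    using good by (simp add: k_def F_def j_def)
  have t0: "0 \<le> t \<and> t \<le> S n" using good' Wge unfolding t_def W_def[symmetric]
    by (intro conjI) (simp_all add: abs_if split: if_splits)
  have Sstep: "S r \<le> S (Suc r) \<and> S (Suc r) \<le> S r + 1" for r
  proof -
    have "S (Suc r) = S r + v (n + Suc r)" unfolding S_def by simp
    moreover have "0 \<le> v (n + Suc r)" "v (n + Suc r) \<le> 1" using g by (auto simp: v_def)
    ultimately show ?thesis by simp
  qed
  obtain r where r: "r \<le> n" "\<bar>S r - t\<bar> \<le> 1/2"
    using net[of S n t] Sstep t0 by (auto simp: S_def)
  define R where "R = {n+1..n+r}"
  define A where "A = F \<union> R"
  have A_sub: "A \<subseteq> {1..m}" using r mn by (auto simp: A_def F_def R_def)
  have comp: "{1..m} - A = {i\<in>{1..n}. \<not> X i} \<union> {n+r+1..m}"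
    using r mn by (auto simp: A_def F_def R_def)
  have cardF: "card {i\<in>{1..n}. \<not> X i} = n - k"
  proof -
    have "{i\<in>{1..n}. \<not> X i} = {1..n} - F" by (auto simp: F_def)
    moreover have "card ({1..n} - F) = card {1..n} - card F"
      by (rule card_Diff_subset) (auto simp: F_def)
    ultimately show ?thesis by (simp add: k_def)
  qed
  have kn: "k \<le> n"
  proof -
    have "card F \<le> card {1..n}" by (rule card_mono) (auto simp: F_def)
    then show ?thesis by (simp add: k_def)
  qed
  have WS: "(\<Sum>i\<in>{n+r+1..m}. v i) = W - S r"
  proof -
    have "{n+1..m} = R \<union> {n+r+1..m}" using r mn by (auto simp: R_def)
    moreover have "R \<inter> {n+r+1..m} = {}" by (auto simp: R_def)
    ultimately have "(\<Sum>i\<in>{n+1..m}. v i) = S r + (\<Sum>i\<in>{n+r+1..m}. v i)"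
      by (simp add: sum.union_disjoint S_def R_def)
    moreover have "(\<Sum>i\<in>{n+1..m}. v i) = W" unfolding W_def S_def using mn by (simp add: mult_2)
    ultimately show ?thesis by simp
  qed
  have disj1: "F \<inter> R = {}" by (auto simp: F_def R_def)
  have disj2: "{i\<in>{1..n}. \<not> X i} \<inter> {n+r+1..m} = {}" by auto
  have sFa: "(\<Sum>i\<in>F. ua i) = real k * (1/2 + \<epsilon>)"
  proof -
    have "(\<Sum>i\<in>F. ua i) = (\<Sum>i\<in>F. 1/2 + \<epsilon>)" by (intro sum.cong) (auto simp: F_def ua1)
    then show ?thesis by (simp add: k_def)
  qed
  have sFb: "(\<Sum>i\<in>F. ub i) = real k * (1/2 - \<epsilon>)"
  proof -
    have "(\<Sum>i\<in>F. ub i) = (\<Sum>i\<in>F. 1/2 - \<epsilon>)" by (intro sum.cong) (auto simp: F_def ub1)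
    then show ?thesis by (simp add: k_def)
  qed
  have sRa: "(\<Sum>i\<in>R. ua i) = S r" unfolding S_def R_def using r mn ua2
    by (intro sum.cong) auto
  have sRb: "(\<Sum>i\<in>R. ub i) = S r" unfolding S_def R_def using r mn ub2
    by (intro sum.cong) auto
  have sCa: "(\<Sum>i\<in>{i\<in>{1..n}. \<not> X i}. ua i) = real (n - k) * (1/2 - \<epsilon>)"
  proof -
    have "(\<Sum>i\<in>{i\<in>{1..n}. \<not> X i}. ua i) = (\<Sum>i\<in>{i\<in>{1..n}. \<not> X i}. 1/2 - \<epsilon>)"
      by (intro sum.cong) (auto simp: ua1)
    then show ?thesis using cardF by simp
  qed
  have sCb: "(\<Sum>i\<in>{i\<in>{1..n}. \<not> X i}. ub i) = real (n - k) * (1/2 + \<epsilon>)"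
  proof -
    have "(\<Sum>i\<in>{i\<in>{1..n}. \<not> X i}. ub i) = (\<Sum>i\<in>{i\<in>{1..n}. \<not> X i}. 1/2 + \<epsilon>)"
      by (intro sum.cong) (auto simp: ub1)
    then show ?thesis using cardF by simp
  qed
  have sDa: "(\<Sum>i\<in>{n+r+1..m}. ua i) = W - S r" 
  proof -
    have "(\<Sum>i\<in>{n+r+1..m}. ua i) = (\<Sum>i\<in>{n+r+1..m}. v i)" by (intro sum.cong) (auto intro!: ua2)
    then show ?thesis using WS by simp
  qed
  have sDb: "(\<Sum>i\<in>{n+r+1..m}. ub i) = W - S r" 
  proof -
    have "(\<Sum>i\<in>{n+r+1..m}. ub i) = (\<Sum>i\<in>{n+r+1..m}. v i)" by (intro sum.cong) (auto intro!: ub2)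
    then show ?thesis using WS by simp
  qed
  have eA: "(\<Sum>i\<in>A. ua i) = real k * (1/2 + \<epsilon>) + S r"
    unfolding A_def using disj1 sFa sRa by (simp add: sum.union_disjoint F_def R_def)
  have eB: "(\<Sum>i\<in>A. ub i) = real k * (1/2 - \<epsilon>) + S r"
    unfolding A_def using disj1 sFb sRb by (simp add: sum.union_disjoint F_def R_def)
  have cA: "(\<Sum>i\<in>{1..m} - A. ua i) = real (n - k) * (1/2 - \<epsilon>) + (W - S r)"
    unfolding comp using disj2 sCa sDa by (simp add: sum.union_disjoint)
  have cB: "(\<Sum>i\<in>{1..m} - A. ub i) = real (n - k) * (1/2 + \<epsilon>) + (W - S r)"
    unfolding comp using disj2 sCb sDb by (simp add: sum.union_disjoint)
  have rk: "real (n - k) = real n - real k" using kn by simp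
  have sr: "S r \<ge> t - 1/2" "S r \<le> t + 1/2" using r(2) abs_le_iff[of "S r - t" "1/2"] by linarith+
  have x1: "envy_ab m ua A = real n / 2 - real k - real n * \<epsilon> + W - 2 * S r"
    unfolding envy_ab_def cA eA rk by (simp add: algebra_simps add_divide_distrib diff_divide_distrib)
  have x2: "envy_ba m ub A = real k - real n / 2 - real n * \<epsilon> - W + 2 * S r"
    unfolding envy_ba_def cB eB rk by (simp add: algebra_simps add_divide_distrib diff_divide_distrib)
  have e1: "envy_ab m ua A \<le> - \<Delta>"
    unfolding x1 using sr eps unfolding t_def by (simp add: field_simps)
  have e2: "envy_ba m ub A \<le> - \<Delta>"
    unfolding x2 using sr eps unfolding t_def by (simp add: field_simps)
  have "opt_envy m ua ub \<le> envy m ua ub A"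
    unfolding opt_envy_def using A_sub by (intro Min_le) auto
  also have "\<dots> \<le> - \<Delta>" using e1 e2 by (simp add: envy_def)
  finally show ?thesis by (simp add: ua_def ub_def)
qed



lemma absmax: "\<bar>a\<bar> + \<bar>b\<bar> > (c::real) \<Longrightarrow> c \<le> \<bar>a + b\<bar> \<or> c \<le> \<bar>a - b\<bar>"
  by (cases "a \<ge> 0"; cases "b \<ge> 0") auto

theorem lemma22:
  fixes m :: nat and \<delta> \<Delta> \<gamma> \<epsilon> :: real
  assumes "4 dvd m"
    and "0 < \<delta>" "\<delta> < 1"
    and "0 < \<Delta>" "\<Delta> < real m"
    and "0 < \<gamma>" "\<gamma> \<le> 1/2"
    and "2 * sqrt (ln (2/\<delta>) * real m) \<le> real m / 2"
    and "4 * (\<Delta> + 1) / real m \<le> 1/2"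
    and "\<epsilon> = 2 * (\<Delta> + 1) / (real m - 2 * sqrt (ln (2/\<delta>) * real m))"
  shows "measure_pmf.prob (X_dist m)
           {X. opt_envy m (mu_a m \<epsilon> \<gamma> X) (mu_b m \<epsilon> \<gamma> X) \<le> - \<Delta>} \<ge> 1 - \<delta>"
proof -
  obtain q where q: "m = 4 * q" using assms(1) by auto
  define n where "n = 2 * q"
  have mn: "m = 2 * n" using q n_def by simp
  have mpos: "real m > 0" using assms(4,5) by linarith
  have m8: "real m \<ge> 8 * (\<Delta> + 1)" using assms(9) mpos by (simp add: field_simps)
  have m12: "real m \<ge> 12"
  proof -
    have "8 * \<Delta> + 8 \<le> real m" using m8 by (simp add: algebra_simps)
    then have "real m > 8" using assms(4) by linarith
    then have "q > 2" using q by simp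
    then show ?thesis using q by simp
  qed
  define L where "L = ln (2/\<delta>)"
  define s where "s = sqrt (L * real m)"
  have L0: "L > 0" unfolding L_def using assms(2,3) by simp
  have s0: "s \<ge> 0" unfolding s_def using L0 mpos by simp
  have s4: "s \<le> real m / 4" using assms(8) unfolding s_def L_def by simp
  have eps: "real n * \<epsilon> \<ge> \<Delta> + 1"
  proof -
    have d: "real m - 2 * s > 0" using s4 mpos by linarith
    have "real n * \<epsilon> = real m * (\<Delta> + 1) / (real m - 2 * s)"
      unfolding assms(10) s_def[symmetric] L_def[symmetric] using mn by (simp add: field_simps)
    also have "\<dots> \<ge> \<Delta> + 1" using d s0 assms(4) by (simp add: field_simps)
    finally show ?thesis .
  qed
  define k where "k = (\<lambda>X::nat\<Rightarrow>bool. card {i\<in>{1..n}. X i})"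
  define j where "j = (\<lambda>X::nat\<Rightarrow>bool. card {i\<in>{n+1..m}. X i})"
  define G where "G = {X. \<bar>real (k X) - real n / 2\<bar> + \<bar>real (j X) - real n / 2\<bar> \<le> real n / 2}"
  define B1 where "B1 = {X. real m / 4 \<le> \<bar>real (card {i\<in>{1..m}. X i}) - real m / 2\<bar>}"
  define B2 where "B2 = {X. real m / 4 \<le> \<bar>real (card {i\<in>{1..m}. flip m X i}) - real m / 2\<bar>}"
  have c1: "card {i\<in>{1..m}. X i} = k X + j X" for X
  proof -
    have "{i\<in>{1..m}. X i} = {i\<in>{1..n}. X i} \<union> {i\<in>{n+1..m}. X i}" using mn by auto
    moreover have "card ({i\<in>{1..n}. X i} \<union> {i\<in>{n+1..m}. X i}) = card {i\<in>{1..n}. X i} + card {i\<in>{n+1..m}. X i}"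
      by (rule card_Un_disjoint) auto
    ultimately show ?thesis unfolding k_def j_def by simp
  qed
  have c2: "card {i\<in>{1..m}. flip m X i} = k X + (n - j X)" for X
  proof -
    have "{i\<in>{1..m}. flip m X i} = {i\<in>{1..n}. X i} \<union> {i\<in>{n+1..m}. \<not> X i}"
      using mn by (auto simp: flip_def)
    moreover have "card {i\<in>{n+1..m}. \<not> X i} = n - j X"
    proof -
      have "{i\<in>{n+1..m}. \<not> X i} = {n+1..m} - {i\<in>{n+1..m}. X i}" by auto
      moreover have "card ({n+1..m} - {i\<in>{n+1..m}. X i}) = card {n+1..m} - card {i\<in>{n+1..m}. X i}"
        by (rule card_Diff_subset) auto
      ultimately show ?thesis using mn by (simp add: j_def)
    qed
    moreover have "card ({i\<in>{1..n}. X i} \<union> {i\<in>{n+1..m}. \<not> X i}) = card {i\<in>{1..n}. X i} + card {i\<in>{n+1..m}. \<not> X i}"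
      by (rule card_Un_disjoint) auto
    ultimately show ?thesis unfolding k_def by simp
  qed
  have jn: "j X \<le> n" for X
  proof -
    have "card {i\<in>{n+1..m}. X i} \<le> card {n+1..m}" by (rule card_mono) auto
    then show ?thesis using mn by (simp add: j_def)
  qed
  have compl: "UNIV - G \<subseteq> B1 \<union> B2"
  proof
    fix X assume "X \<in> UNIV - G"
    then have ng: "\<bar>real (k X) - real n / 2\<bar> + \<bar>real (j X) - real n / 2\<bar> > real n / 2"
      unfolding G_def by auto
    have r2: "real (n - j X) = real n - real (j X)" using jn[of X] by simp
    have e1: "real (card {i\<in>{1..m}. X i}) - real m / 2 = (real (k X) - real n / 2) + (real (j X) - real n / 2)"
      unfolding c1 using mn by simp
    have e2: "real (card {i\<in>{1..m}. flip m X i}) - real m / 2 = (real (k X) - real n / 2) - (real (j X) - real n / 2)"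
      unfolding c2 r2 of_nat_add using mn by simp
    have e3: "real m / 4 = real n / 2" using mn by simp
    show "X \<in> B1 \<union> B2"
      using absmax[OF ng] unfolding B1_def B2_def e3 
      by (simp only: e1 e2 mem_Collect_eq Un_iff)
  qed
  have sub: "G \<subseteq> {X. opt_envy m (mu_a m \<epsilon> \<gamma> X) (mu_b m \<epsilon> \<gamma> X) \<le> - \<Delta>}"
  proof
    fix X assume "X \<in> G"
    then show "X \<in> {X. opt_envy m (mu_a m \<epsilon> \<gamma> X) (mu_b m \<epsilon> \<gamma> X) \<le> - \<Delta>}"
      using det[OF mn assms(6,7) eps, of X] unfolding G_def k_def j_def by auto
  qed
  have m0: "m > 0" using mpos by simp
  have pB: "measure_pmf.prob (X_dist m) (UNIV - G) \<le> 4 * exp (- real m / 8)"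
  proof -
    have "measure_pmf.prob (X_dist m) (UNIV - G) \<le> measure_pmf.prob (X_dist m) (B1 \<union> B2)"
      by (rule measure_pmf.finite_measure_mono[OF compl]) auto
    also have "\<dots> \<le> measure_pmf.prob (X_dist m) B1 + measure_pmf.prob (X_dist m) B2"
      by (rule measure_Un_le) auto
    also have "\<dots> \<le> 2 * exp (- real m / 8) + 2 * exp (- real m / 8)"
      using tail[OF m0] tail_flip[OF m0] unfolding B1_def B2_def by (intro add_mono)
    finally show ?thesis by simp
  qed
  have pG: "measure_pmf.prob (X_dist m) G = 1 - measure_pmf.prob (X_dist m) (UNIV - G)"
    using measure_pmf.prob_compl[of G "X_dist m"] by simp
  have bound: "4 * exp (- real m / 8) \<le> \<delta>"
  proof -
    define e where "e = exp (real m / 16)"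
    have e0: "e > 0" unfolding e_def by simp
    have e2: "e \<ge> 2"
    proof -
      have "exp (3/4::real) \<ge> 1 + 3/4 + (3/4)\<^sup>2/2" by (rule exp_lower_Taylor_quadratic) simp
      moreover have "exp (3/4::real) \<le> e" unfolding e_def using m12 by simp
      ultimately show ?thesis by (simp add: power2_eq_square)
    qed
    have Lm: "L \<le> real m / 16"
    proof -
      have "s\<^sup>2 \<le> (real m / 4)\<^sup>2" using s4 s0 by (intro power_mono) auto
      moreover have "s\<^sup>2 = L * real m" unfolding s_def using L0 mpos by simp
      ultimately have "L * real m \<le> real m * (real m / 16)" by (simp add: power2_eq_square)
      then show ?thesis using mpos by (simp add: mult.commute)
    qed
    have "2 / \<delta> \<le> e"
    proof -
      have "2 / \<delta> = exp L" unfolding L_def using assms(2) by simp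
      also have "\<dots> \<le> e" unfolding e_def using Lm by simp
      finally show ?thesis .
    qed
    then have d: "2 / e \<le> \<delta>" using assms(2) e0 by (simp add: field_simps)
    have "exp (- real m / 8) = 1 / e\<^sup>2"
      unfolding e_def by (simp add: power2_eq_square exp_add[symmetric] exp_minus field_simps)
    then have "4 * exp (- real m / 8) = (2 / e) * (2 / e)" by (simp add: power2_eq_square)
    also have "\<dots> \<le> 2 / e * 1" using e2 e0 by (intro mult_left_mono) (auto simp: field_simps)
    finally show ?thesis using d by simp
  qed
  have "1 - \<delta> \<le> measure_pmf.prob (X_dist m) G" using pB pG bound by linarith
  also have "\<dots> \<le> measure_pmf.prob (X_dist m) {X. opt_envy m (mu_a m \<epsilon> \<gamma> X) (mu_b m \<epsilon> \<gamma> X) \<le> - \<Delta>}"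
    by (rule measure_pmf.finite_measure_mono[OF sub]) auto
  finally show ?thesis .
qed

end
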